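(* Let $\mathbb{F}$ be a finite field, $G\subseteq\mathbb{F}$, $m,k\in\mathbb{N}$, and $d,d'\in\mathbb{N}$ with $d'\ge 2(|G|-1)$. Suppose $S\subseteq\mathbb{F}^{m+k}$ is such that there exist coefficients $(c_{\vec\alpha})_{\vec\alpha\in\mathbb{F}^m}$ and $(d_{\vec q})_{\vec q\in S}$ in $\mathbb{F}$ with (i) for all $Z\in\mathbb{F}^{\le d,\le d'}[X_1,\dots,X_m,Y_1,\dots,Y_k]$: $\sum_{\vec\alpha\in\mathbb{F}^m}c_{\vec\alpha}\sum_{\vec y\in G^k}Z(\vec\alpha,\vec y)=\sum_{\vec q\in S}d_{\vec q}Z(\vec q)$, and (ii) there exists $Z'\in\mathbb{F}^{\le d,\le d'}[X_1,\dots,X_m,Y_1,\dots,Y_k]$ with $\sum_{\vec\alpha\in\mathbb{F}^m}c_{\vec\alpha}\sum_{\vec y\in G^k}Z'(\vec\alpha,\vec y)\ne 0$. Then $|S|\ge|G|^k$.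
   Context: $\mathbb{F}^{\le d,\le d'}[X_1,\dots,X_m,Y_1,\dots,Y_k]$ denotes the set of $(m+k)$-variate polynomials over $\mathbb{F}$ of individual degree at most $d$ in each of $X_1,\dots,X_m$ and at most $d'$ in each of $Y_1,\dots,Y_k$. *)

theory Defs
  imports Main
begin

definition vecs :: "nat \<Rightarrow> 'a list set" where
  "vecs n = {v. length v = n}"

definition exps :: "nat \<Rightarrow> nat \<Rightarrow> nat \<Rightarrow> nat \<Rightarrow> nat list set" where
  "exps m k d d' = {e. length e = m + k \<and> (\<forall>i<m. e ! i \<le> d) \<and>
                        (\<forall>i. m \<le> i \<and> i < m + k \<longrightarrow> e ! i \<le> d')}"

definition mpoly_eval :: "nat \<Rightarrow> nat \<Rightarrow> nat \<Rightarrow> nat \<Rightarrow> (nat list \<Rightarrow> 'a::comm_ring_1) \<Rightarrow> 'a list \<Rightarrow> 'a" where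
  "mpoly_eval m k d d' c v = (\<Sum>e\<in>exps m k d d'. c e * (\<Prod>i<m + k. (v ! i) ^ (e ! i)))"

text \<open>F^{<=d,<=d'}[X_1..X_m,Y_1..Y_k], represented by the evaluation maps of its elements
  (a polynomial is given by an arbitrary coefficient for each admissible monomial).\<close>
definition ideg_polys :: "nat \<Rightarrow> nat \<Rightarrow> nat \<Rightarrow> nat \<Rightarrow> ('a::comm_ring_1 list \<Rightarrow> 'a) set" where
  "ideg_polys m k d d' = {mpoly_eval m k d d' c | c. True}"

end

theory Submission
  imports Defs "HOL-Computational_Algebra.Polynomial"
begin


lemma linsys:
  fixes A :: "'i \<Rightarrow> 'j \<Rightarrow> 'a::field"
  assumes "finite I" "finite J" "card I < card J"
  shows "\<exists>x. (\<exists>j\<in>J. x j \<noteq> 0) \<and> (\<forall>i\<in>I. (\<Sum>j\<in>J. A i j * x j) = 0)"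
  using assms
proof (induction I arbitrary: J A rule: finite_induct)
  case empty
  then have "J \<noteq> {}" by auto
  then show ?case by (intro exI[of _ "\<lambda>_. 1"]) auto
next
  case (insert i I)
  show ?case
  proof (cases "\<forall>j\<in>J. A i j = 0")
    case True
    from insert.IH[of J A] insert.prems insert.hyps obtain x where
      "(\<exists>j\<in>J. x j \<noteq> 0)" "(\<forall>i\<in>I. (\<Sum>j\<in>J. A i j * x j) = 0)" by auto
    then show ?thesis using True by (intro exI[of _ x]) auto
  next
    case False
    then obtain j0 where j0: "j0 \<in> J" "A i j0 \<noteq> 0" by auto
    define J' where "J' = J - {j0}"
    define A' where "A' = (\<lambda>i' j. A i' j - A i' j0 * A i j / A i j0)"
    have "card I < card J'" using insert.prems insert.hyps j0 unfolding J'_def by auto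
    from insert.IH[of J' A', OF _ this] insert.prems obtain x' where
      x': "(\<exists>j\<in>J'. x' j \<noteq> 0)" "(\<forall>i\<in>I. (\<Sum>j\<in>J'. A' i j * x' j) = 0)"
      unfolding J'_def by auto
    define s where "s = (\<Sum>j\<in>J'. A i j * x' j)"
    define x where "x = x'(j0 := - s / A i j0)"
    have fJ': "finite J'" using insert.prems unfolding J'_def by auto
    have split: "(\<Sum>j\<in>J. B j * x j) = B j0 * x j0 + (\<Sum>j\<in>J'. B j * x' j)" for B
    proof -
      have "(\<Sum>j\<in>J. B j * x j) = B j0 * x j0 + (\<Sum>j\<in>J'. B j * x j)"
        unfolding J'_def using insert.prems j0 by (simp add: sum.remove)
      also have "(\<Sum>j\<in>J'. B j * x j) = (\<Sum>j\<in>J'. B j * x' j)"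
        by (rule sum.cong) (auto simp: x_def J'_def)
      finally show ?thesis .
    qed
    have "\<forall>i'\<in>insert i I. (\<Sum>j\<in>J. A i' j * x j) = 0"
    proof
      fix i' assume "i' \<in> insert i I"
      then consider "i' = i" | "i' \<in> I" by auto
      then show "(\<Sum>j\<in>J. A i' j * x j) = 0"
      proof cases
        case 1
        have "(\<Sum>j\<in>J. A i j * x j) = A i j0 * x j0 + s" using split[of "A i"] s_def by simp
        moreover have "x j0 = - s / A i j0" by (simp add: x_def)
        ultimately show ?thesis using j0 1 by simp
      next
        case 2
        have "0 = (\<Sum>j\<in>J'. A' i' j * x' j)" using x' 2 by auto
        also have "\<dots> = (\<Sum>j\<in>J'. A i' j * x' j) - A i' j0 / A i j0 * s"
          unfolding A'_def s_def by (simp add: algebra_simps sum_subtractf sum_distrib_left)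
        finally have T: "A i' j0 / A i j0 * s = (\<Sum>j\<in>J'. A i' j * x' j)" by simp
        have "x j0 = - s / A i j0" by (simp add: x_def)
        then have "A i' j0 * x j0 = - (A i' j0 / A i j0 * s)" by simp
        also have "\<dots> = - (\<Sum>j\<in>J'. A i' j * x' j)" using T by simp
        finally have "A i' j0 * x j0 + (\<Sum>j\<in>J'. A i' j * x' j) = 0" by simp
        then show ?thesis using split[of "A i'"] by simp
      qed
    qed
    moreover have "\<exists>j\<in>J. x j \<noteq> 0" using x' unfolding x_def J'_def by auto
    ultimately show ?thesis by blast
  qed
qed



lemma prod_sum_lists:
  fixes a :: "nat \<Rightarrow> nat \<Rightarrow> 'a::comm_semiring_1" and x :: "nat \<Rightarrow> 'a"
  shows "(\<Prod>i<n. \<Sum>j\<le>b i. a i j * x i ^ j) =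
    (\<Sum>e\<in>{e. length e = n \<and> (\<forall>i<n. e!i \<le> b i)}. \<Prod>i<n. a i (e!i) * x i ^ (e!i))"
proof (induction n)
  case 0
  have "{e::nat list. length e = 0 \<and> (\<forall>i<0. e!i \<le> b i)} = {[]}" by auto
  then show ?case by simp
next
  case (Suc n)
  let ?E = "\<lambda>n. {e::nat list. length e = n \<and> (\<forall>i<n. e!i \<le> b i)}"
  have fin: "finite (?E n)"
  proof -
    have "?E n \<subseteq> {e. set e \<subseteq> {..(\<Sum>i<n. b i)} \<and> length e = n}"
    proof (rule subsetI, rule CollectI, rule conjI)
      fix e assume e: "e \<in> ?E n"
      show "set e \<subseteq> {..(\<Sum>i<n. b i)}"
      proof
        fix y assume "y \<in> set e"
        then obtain i where i: "i < length e" "y = e ! i" by (auto simp: in_set_conv_nth)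
        then have "y \<le> b i" using e by auto
        also have "b i \<le> (\<Sum>i<n. b i)" using i e by (intro member_le_sum) auto
        finally show "y \<in> {..(\<Sum>i<n. b i)}" by simp
      qed
      show "length e = n" using e by simp
    qed
    then show ?thesis by (rule finite_subset) (rule finite_lists_length_eq, simp)
  qed
  have img: "?E (Suc n) = (\<lambda>(e,j). e @ [j]) ` (?E n \<times> {..b n})"
  proof (intro set_eqI iffI)
    fix e assume e: "e \<in> ?E (Suc n)"
    then have "e \<noteq> []" by auto
    then obtain e' j where ej: "e = e' @ [j]" by (cases e rule: rev_exhaust) auto
    have len: "length e' = n" using e ej by simp
    have "j \<le> b n" using e ej len by (metis (mono_tags, lifting) lessI mem_Collect_eq nth_append_length)
    moreover have "e' \<in> ?E n"
    proof -
      have "e' ! i \<le> b i" if "i < n" for i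
        using e ej len that by (metis (mono_tags, lifting) less_SucI mem_Collect_eq nth_append)
      then show ?thesis using len by simp
    qed
    ultimately show "e \<in> (\<lambda>(e,j). e @ [j]) ` (?E n \<times> {..b n})"
      using ej by (intro image_eqI[of _ _ "(e', j)"]) auto
  next
    fix e assume "e \<in> (\<lambda>(e,j). e @ [j]) ` (?E n \<times> {..b n})"
    then show "e \<in> ?E (Suc n)" by (auto simp: nth_append less_Suc_eq)
  qed
  have inj: "inj_on (\<lambda>(e,j). e @ [j]) (?E n \<times> {..b n})"
    by (auto simp: inj_on_def)
  have "(\<Sum>e\<in>?E (Suc n). \<Prod>i<Suc n. a i (e!i) * x i ^ (e!i))
     = (\<Sum>(e,j)\<in>?E n \<times> {..b n}. \<Prod>i<Suc n. a i ((e@[j])!i) * x i ^ ((e@[j])!i))"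
    unfolding img by (subst sum.reindex[OF inj]) (simp add: case_prod_beta)
  also have "\<dots> = (\<Sum>(e,j)\<in>?E n \<times> {..b n}. (\<Prod>i<n. a i (e!i) * x i ^ (e!i)) * (a n j * x n ^ j))"
    by (rule sum.cong) (auto simp: nth_append intro!: prod.cong)
  also have "\<dots> = (\<Sum>e\<in>?E n. \<Sum>j\<le>b n. (\<Prod>i<n. a i (e!i) * x i ^ (e!i)) * (a n j * x n ^ j))"
    by (simp add: sum.cartesian_product)
  also have "\<dots> = (\<Prod>i<Suc n. \<Sum>j\<le>b i. a i j * x i ^ j)"
    by (simp add: Suc sum_product)
  finally show ?case by simp
qed



lemma prod_split: fixes m k :: nat shows "(\<Prod>i<m+k. h i) = (\<Prod>i<m. h i) * (\<Prod>i<k. h (m+i)::'a::comm_monoid_mult)"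
  by (induction k) (simp_all add: mult_ac)

lemma exps_alt: "exps m k d d' = {e. length e = m+k \<and> (\<forall>i<m+k. e!i \<le> (if i<m then d else d'))}"
proof (rule set_eqI)
  fix e :: "nat list"
  have "(\<forall>i<m+k. e!i \<le> (if i<m then d else d')) \<longleftrightarrow>
        (\<forall>i<m. e ! i \<le> d) \<and> (\<forall>i. m \<le> i \<and> i < m + k \<longrightarrow> e ! i \<le> d')"
  proof safe
    fix i assume "\<forall>i<m+k. e!i \<le> (if i<m then d else d')" "i < m"
    then show "e!i \<le> d" by (metis trans_less_add1)
  next
    fix i assume "\<forall>i<m+k. e!i \<le> (if i<m then d else d')" "m \<le> i" "i < m + k"
    then show "e!i \<le> d'" by (metis not_le)
  next
    fix i assume "\<forall>i<m. e ! i \<le> d" "\<forall>i. m \<le> i \<and> i < m + k \<longrightarrow> e ! i \<le> d'" "i < m + k"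
    then show "e!i \<le> (if i<m then d else d')" by (metis not_le)
  qed
  then show "e \<in> exps m k d d' \<longleftrightarrow> e \<in> {e. length e = m+k \<and> (\<forall>i<m+k. e!i \<le> (if i<m then d else d'))}"
    unfolding exps_def by blast
qed

lemma ideg_prodform:
  fixes f :: "nat \<Rightarrow> 'a::comm_ring_1 \<Rightarrow> 'a"
  assumes "\<forall>i<m+k. \<forall>x. f i x = (\<Sum>j\<le>(if i<m then d else d'). a i j * x^j)"
  shows "(\<lambda>v. \<Prod>i<m+k. f i (v!i)) \<in> ideg_polys m k d d'"
proof -
  let ?b = "\<lambda>i. if i<m then d else d'"
  have "mpoly_eval m k d d' (\<lambda>e. \<Prod>i<m+k. a i (e!i)) v = (\<Prod>i<m+k. f i (v!i))" for v
  proof -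
    have "mpoly_eval m k d d' (\<lambda>e. \<Prod>i<m+k. a i (e!i)) v
      = (\<Sum>e\<in>exps m k d d'. \<Prod>i<m+k. a i (e!i) * (v!i) ^ (e!i))"
      unfolding mpoly_eval_def by (rule sum.cong[OF refl]) (rule prod.distrib[symmetric])
    also have "\<dots> = (\<Prod>i<m+k. \<Sum>j\<le>?b i. a i j * (v!i) ^ j)"
      unfolding exps_alt by (rule prod_sum_lists[symmetric])
    also have "\<dots> = (\<Prod>i<m+k. f i (v!i))"
      by (rule prod.cong[OF refl]) (use assms in simp)
    finally show ?thesis .
  qed
  then have "(\<lambda>v. \<Prod>i<m+k. f i (v!i)) = mpoly_eval m k d d' (\<lambda>e. \<Prod>i<m+k. a i (e!i))"
    by (intro ext) simp
  then show ?thesis unfolding ideg_polys_def by blast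
qed

lemma ideg_sum:
  assumes "\<forall>g\<in>A. F g \<in> ideg_polys m k d d'"
  shows "(\<lambda>v. \<Sum>g\<in>A. w g * F g v) \<in> ideg_polys m k d d'"
proof -
  from assms have "\<forall>g\<in>A. \<exists>c. F g = mpoly_eval m k d d' c" unfolding ideg_polys_def by blast
  then obtain C where C: "\<And>g. g \<in> A \<Longrightarrow> F g = mpoly_eval m k d d' (C g)" by metis
  have "(\<Sum>g\<in>A. w g * F g v) = mpoly_eval m k d d' (\<lambda>e. \<Sum>g\<in>A. w g * C g e) v" for v
  proof -
    have "(\<Sum>g\<in>A. w g * F g v) = (\<Sum>g\<in>A. w g * mpoly_eval m k d d' (C g) v)"
      using C by simp
    also have "\<dots> = (\<Sum>g\<in>A. \<Sum>e\<in>exps m k d d'. w g * (C g e * (\<Prod>i<m + k. (v ! i) ^ (e ! i))))"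
      unfolding mpoly_eval_def by (simp add: sum_distrib_left)
    also have "\<dots> = (\<Sum>e\<in>exps m k d d'. \<Sum>g\<in>A. w g * (C g e * (\<Prod>i<m + k. (v ! i) ^ (e ! i))))"
      by (rule sum.swap)
    also have "\<dots> = mpoly_eval m k d d' (\<lambda>e. \<Sum>g\<in>A. w g * C g e) v"
      unfolding mpoly_eval_def by (simp add: sum_distrib_right mult_ac)
    finally show ?thesis .
  qed
  then have "(\<lambda>v. \<Sum>g\<in>A. w g * F g v) = mpoly_eval m k d d' (\<lambda>e. \<Sum>g\<in>A. w g * C g e)"
    by (intro ext) simp
  then show ?thesis unfolding ideg_polys_def by blast
qed



definition lag :: "'a::field set \<Rightarrow> 'a \<Rightarrow> 'a poly" where
  "lag G h = smult (inverse (\<Prod>h'\<in>G-{h}. h - h')) (\<Prod>h'\<in>G-{h}. [:-h', 1:])"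

lemma poly_lag0: "poly (lag G h) x = inverse (\<Prod>h'\<in>G-{h}. h - h') * (\<Prod>h'\<in>G-{h}. x - h')"
  by (simp add: lag_def poly_prod)

lemma poly_lag:
  assumes "finite G" "h \<in> G" "x \<in> G"
  shows "poly (lag G h) x = (if x = h then 1 else 0)"
proof (cases "x = h")
  case True
  have "(\<Prod>h'\<in>G-{h}. h - h') \<noteq> 0" using assms(1) by (auto simp: prod_zero_iff)
  then show ?thesis using True by (simp add: poly_lag0)
next
  case False
  then have "x \<in> G - {h}" using assms by auto
  then have "(\<Prod>h'\<in>G-{h}. x - h') = 0" using assms(1) by (auto simp: prod_zero_iff)
  then show ?thesis using False by (simp add: poly_lag0)
qed

lemma degree_lag:
  assumes "finite G" "h \<in> G"
  shows "degree (lag G h) \<le> card G - 1"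
proof -
  have "degree (lag G h) \<le> degree (\<Prod>h'\<in>G-{h}. [:-h', 1:])"
    unfolding lag_def by (rule degree_smult_le)
  also have "\<dots> \<le> sum (degree \<circ> (\<lambda>h'. [:-h', 1:])) (G-{h})"
    using assms by (intro degree_prod_sum_le) auto
  also have "\<dots> = card G - 1" using assms by simp
  finally show ?thesis .
qed

lemma poly_sum_le:
  fixes p :: "'a::comm_ring_1 poly"
  assumes "degree p \<le> n"
  shows "poly p x = (\<Sum>j\<le>n. coeff p j * x^j)"
proof -
  have "poly p x = (\<Sum>j\<le>degree p. coeff p j * x^j)" by (rule poly_altdef)
  also have "\<dots> = (\<Sum>j\<le>n. coeff p j * x^j)"
  proof (rule sum.mono_neutral_left)
    show "finite {..n}" by simp
    show "{..degree p} \<subseteq> {..n}" using assms by auto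
    show "\<forall>i\<in>{..n} - {..degree p}. coeff p i * x ^ i = 0"
      by (simp add: coeff_eq_0)
  qed
  finally show ?thesis .
qed



lemma dl_delta:
  fixes G :: "'a::field set"
  assumes "finite G" "g \<in> {y \<in> vecs k. set y \<subseteq> G}" "y \<in> {y \<in> vecs k. set y \<subseteq> G}"
  shows "(\<Prod>i<k. poly (lag G (g!i)) (y!i)) = (if g = y then 1 else 0)"
proof (cases "g = y")
  case True
  have "poly (lag G (y!i)) (y!i) = 1" if "i < k" for i
    using assms that True by (subst poly_lag) (auto simp: vecs_def)
  then show ?thesis using True by simp
next
  case False
  have "length g = k" "length y = k" using assms by (auto simp: vecs_def)
  then obtain i where i: "i < k" "g!i \<noteq> y!i" using False nth_equalityI by metis
  then have "poly (lag G (g!i)) (y!i) = 0"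
    using assms \<open>length g = k\<close> \<open>length y = k\<close> by (subst poly_lag) (auto simp: vecs_def)
  then show ?thesis using False i by (auto intro!: prod_zero)
qed

theorem corollary8p2:
  fixes G :: "'a::{finite, field} set"
    and m k d d' :: nat
    and S :: "'a list set"
    and c dq :: "'a list \<Rightarrow> 'a"
  assumes "d' \<ge> 2 * (card G - 1)"
    and "S \<subseteq> vecs (m + k)"
    and "\<forall>Z \<in> ideg_polys m k d d'.
           (\<Sum>\<alpha>\<in>vecs m. c \<alpha> * (\<Sum>y\<in>{y \<in> vecs k. set y \<subseteq> G}. Z (\<alpha> @ y)))
           = (\<Sum>q\<in>S. dq q * Z q)"
    and "\<exists>Z' \<in> ideg_polys m k d d'.
           (\<Sum>\<alpha>\<in>vecs m. c \<alpha> * (\<Sum>y\<in>{y \<in> vecs k. set y \<subseteq> G}. Z' (\<alpha> @ y))) \<noteq> 0"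
  shows "card S \<ge> card G ^ k"
proof (rule ccontr)
  assume "\<not> card G ^ k \<le> card S"
  hence lt: "card S < card G ^ k" by simp
  have finG: "finite G" by (rule finite_subset[OF subset_UNIV]) simp
  have finS: "finite S"
  proof (rule finite_subset)
    show "S \<subseteq> {xs. set xs \<subseteq> UNIV \<and> length xs = m+k}" using assms(2) by (auto simp: vecs_def)
  qed (rule finite_lists_length_eq, simp)
  define J where "J = {y \<in> vecs k. set y \<subseteq> G}"
  have J_eq: "J = {xs. set xs \<subseteq> G \<and> length xs = k}" by (auto simp: J_def vecs_def)
  have finJ: "finite J" unfolding J_eq using finG by (rule finite_lists_length_eq)
  have cardJ: "card J = card G ^ k" unfolding J_eq using finG by (rule card_lists_length_eq)
  have finV: "finite (vecs m :: 'a list set)" unfolding vecs_def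
    using finite_lists_length_eq[of "UNIV::'a set" m] by simp
  define L where "L = (\<lambda>Z. \<Sum>\<alpha>\<in>vecs m. c \<alpha> * (\<Sum>y\<in>J. Z (\<alpha> @ y)))"
  from assms(4) obtain c' where c': "L (mpoly_eval m k d d' c') \<noteq> 0"
    unfolding ideg_polys_def L_def J_def by blast
  define M where "M = (\<lambda>e (\<alpha>::'a list). \<Prod>i<m. (\<alpha>!i)^(e!i))"
  have "\<exists>e\<in>exps m k d d'. (\<Sum>\<alpha>\<in>vecs m. c \<alpha> * M e \<alpha>) \<noteq> 0"
  proof (rule ccontr)
    assume "\<not> ?thesis"
    hence z: "\<And>e. e \<in> exps m k d d' \<Longrightarrow> (\<Sum>\<alpha>\<in>vecs m. c \<alpha> * M e \<alpha>) = 0" by auto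
    define N where "N = (\<lambda>e (y::'a list). \<Prod>i<k. (y!i)^(e!(m+i)))"
    have ev: "mpoly_eval m k d d' c' (\<alpha> @ y) = (\<Sum>e\<in>exps m k d d'. c' e * N e y * M e \<alpha>)"
      if "\<alpha> \<in> vecs m" for \<alpha> y
    proof -
      have "length \<alpha> = m" using that by (simp add: vecs_def)
      then have "(\<Prod>i<m + k. ((\<alpha> @ y) ! i) ^ (e ! i)) = M e \<alpha> * N e y" for e
        unfolding M_def N_def prod_split by (simp add: nth_append)
      then show ?thesis unfolding mpoly_eval_def by (simp add: mult_ac)
    qed
    have "L (mpoly_eval m k d d' c') = (\<Sum>\<alpha>\<in>vecs m. \<Sum>y\<in>J. \<Sum>e\<in>exps m k d d'. c' e * N e y * (c \<alpha> * M e \<alpha>))"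
      unfolding L_def by (simp add: ev sum_distrib_left mult_ac)
    also have "\<dots> = (\<Sum>y\<in>J. \<Sum>\<alpha>\<in>vecs m. \<Sum>e\<in>exps m k d d'. c' e * N e y * (c \<alpha> * M e \<alpha>))"
      by (rule sum.swap)
    also have "\<dots> = (\<Sum>y\<in>J. \<Sum>e\<in>exps m k d d'. \<Sum>\<alpha>\<in>vecs m. c' e * N e y * (c \<alpha> * M e \<alpha>))"
      by (rule sum.cong[OF refl], rule sum.swap)
    also have "\<dots> = (\<Sum>y\<in>J. \<Sum>e\<in>exps m k d d'. c' e * N e y * (\<Sum>\<alpha>\<in>vecs m. c \<alpha> * M e \<alpha>))"
      by (simp add: sum_distrib_left)
    also have "\<dots> = 0" by (simp add: z)
    finally show False using c' by simp
  qed
  then obtain e where e: "e \<in> exps m k d d'" and A0: "(\<Sum>\<alpha>\<in>vecs m. c \<alpha> * M e \<alpha>) \<noteq> 0" by blast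
  define dl where "dl = (\<lambda>g (y::'a list). \<Prod>i<k. poly (lag G (g!i)) (y!i))"
  have dl_d: "\<And>g y. g \<in> J \<Longrightarrow> y \<in> J \<Longrightarrow> dl g y = (if g = y then 1 else 0)"
    unfolding dl_def J_def using finG by (rule dl_delta)
  have "card S < card J" using lt cardJ by simp
  from linsys[OF finS finJ this, of "\<lambda>q g. dl g (drop m q)"] obtain a where
    a: "\<exists>j\<in>J. a j \<noteq> 0" "\<forall>q\<in>S. (\<Sum>g\<in>J. dl g (drop m q) * a g) = 0" by blast
  then obtain g0 where g0: "g0 \<in> J" "a g0 \<noteq> 0" by blast
  define P where "P = (\<lambda>g i. lag G (g!i) * lag G (g0!i))"
  define Z where "Z = (\<lambda>v. M e v * (\<Sum>g\<in>J. a g * (\<Prod>i<k. poly (P g i) (v!(m+i)))))"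
  define f where "f = (\<lambda>g i. if i < m then (\<lambda>x::'a. x^(e!i)) else poly (P g (i-m)))"
  have Zf: "Z = (\<lambda>v. \<Sum>g\<in>J. a g * (\<Prod>i<m+k. f g i (v!i)))"
    unfolding Z_def f_def M_def prod_split by (simp add: sum_distrib_left mult_ac)
  have Zin: "Z \<in> ideg_polys m k d d'"
    unfolding Zf
  proof (rule ideg_sum, intro ballI)
    fix g assume g: "g \<in> J"
    let ?a = "\<lambda>i j. if i < m then (if j = e!i then 1 else 0) else coeff (P g (i-m)) j"
    show "(\<lambda>v. \<Prod>i<m+k. f g i (v!i)) \<in> ideg_polys m k d d'"
    proof (rule ideg_prodform[where a = ?a], intro allI impI)
      fix i x assume i: "i < m + k"
      show "f g i x = (\<Sum>j\<le>(if i<m then d else d'). ?a i j * x^j)"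
      proof (cases "i < m")
        case True
        have "e!i \<le> d" using e True by (simp add: exps_def)
        then show ?thesis using True by (simp add: f_def if_distrib[of "\<lambda>u. u * _"] cong: if_cong)
      next
        case False
        have gi: "g!(i-m) \<in> G" "g0!(i-m) \<in> G" using g g0 i False
          by (auto simp: J_def vecs_def)
        have "degree (P g (i-m)) \<le> (card G - 1) + (card G - 1)"
          unfolding P_def
          by (rule order.trans[OF degree_mult_le add_mono]) (use degree_lag[OF finG gi(1)] degree_lag[OF finG gi(2)] in auto)
        also have "\<dots> \<le> d'" using assms(1) by simp
        finally have "degree (P g (i-m)) \<le> d'" .
        then show ?thesis using False by (simp add: f_def poly_sum_le)
      qed
    qed
  qed
  have "Z q = 0" if q: "q \<in> S" for q
  proof -
    have len: "length q = m + k" using q assms(2) by (auto simp: vecs_def)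
    have "(\<Prod>i<k. poly (P g i) (q!(m+i))) = dl g (drop m q) * dl g0 (drop m q)" for g
      unfolding P_def dl_def using len by (simp add: prod.distrib)
    then have "(\<Sum>g\<in>J. a g * (\<Prod>i<k. poly (P g i) (q!(m+i))))
       = (\<Sum>g\<in>J. dl g (drop m q) * a g) * dl g0 (drop m q)"
      by (simp add: sum_distrib_left sum_distrib_right mult_ac)
    also have "\<dots> = 0" using a(2) q by simp
    finally show ?thesis unfolding Z_def by simp
  qed
  then have R: "(\<Sum>q\<in>S. dq q * Z q) = 0" by simp
  have "(\<Sum>y\<in>J. Z (\<alpha> @ y)) = M e \<alpha> * a g0" if \<alpha>: "\<alpha> \<in> vecs m" for \<alpha>
  proof -
    have len: "length \<alpha> = m" using \<alpha> by (simp add: vecs_def)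
    have "Z (\<alpha> @ y) = M e \<alpha> * (if y = g0 then a g0 else 0)" if y: "y \<in> J" for y
    proof -
      have "M e (\<alpha> @ y) = M e \<alpha>" unfolding M_def using len by (simp add: nth_append)
      moreover have "(\<Prod>i<k. poly (P g i) ((\<alpha> @ y)!(m+i))) = dl g y * dl g0 y" for g
        unfolding P_def dl_def using len by (simp add: prod.distrib nth_append)
      moreover have "(\<Sum>g\<in>J. a g * (dl g y * dl g0 y)) = (if y = g0 then a g0 else 0)"
      proof -
        have "(\<Sum>g\<in>J. a g * (dl g y * dl g0 y)) = (\<Sum>g\<in>J. if g = y then (if y = g0 then a g0 else 0) else 0)"
          using y g0 by (intro sum.cong refl) (auto simp: dl_d)
        also have "\<dots> = (if y = g0 then a g0 else 0)" using y finJ by simp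
        finally show ?thesis .
      qed
      ultimately show ?thesis unfolding Z_def by simp
    qed
    then have "(\<Sum>y\<in>J. Z (\<alpha> @ y)) = (\<Sum>y\<in>J. M e \<alpha> * (if y = g0 then a g0 else 0))"
      by (intro sum.cong) auto
    also have "\<dots> = M e \<alpha> * a g0" using g0 finJ by (simp add: if_distrib[of "\<lambda>u. M e \<alpha> * u"] cong: if_cong)
    finally show ?thesis .
  qed
  then have "L Z = (\<Sum>\<alpha>\<in>vecs m. c \<alpha> * M e \<alpha>) * a g0"
    unfolding L_def by (simp add: sum_distrib_left sum_distrib_right mult_ac)
  also have "\<dots> \<noteq> 0" using A0 g0 by simp
  finally have "L Z \<noteq> 0" .
  moreover have "L Z = (\<Sum>q\<in>S. dq q * Z q)" using assms(3) Zin unfolding L_def J_def by blast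
  ultimately show False using R by simp
qed

end
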